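(* Let $k\ge3$, and let $\nu_0$ be an initial distribution of the $S_k$ shuffle on $\mathcal S_N$ such that $\sigma\mapsto\nu_0(\sigma)/\mu_N(\sigma)$ is increasing with respect to $\succeq$. Let $\mathcal C$ be a censoring scheme and let $\nu^{\mathcal C}_t$ be the law at time $t$ of the censored $S_k$ shuffle (with respect to $\mathcal C$) started from $\nu_0$. Then for every $t\ge0$ the function $\sigma\mapsto\nu^{\mathcal C}_t(\sigma)/\mu_N(\sigma)$ is increasing with respect to $\succeq$, and the censoring inequality holds: for every $t\ge0$ and every fixed realization of the update times, the law at time $t$ of the censored dynamics stochastically dominates (with respect to $\succeq$) the law at time $t$ of the uncensored $S_k$ shuffle, both started from $\nu_0$ and driven by these same update times.
   Context: $\mathcal S_N$ is the symmetric group on $[N]$, $\sigma(z)$ the label of the card at position $z$; $\mu_N$ the uniform measure. The $S_k$ shuffle: each block $\{i,\dots,i+k-1\}$, $1\le i\le N-k+1$, has an independent rate-1 Poisson clock (the update times); when it rings the cards in the block are rearranged by a uniform element of $\mathcal S_k$. Height function $h_\sigma(x,y)=\sum_{z=1}^x\mathbf 1\{\sigma(z)\le y\}-xy/N$; partial order: $\sigma\succeq\sigma'$ iff $h_\sigma(x,y)\ge h_{\sigma'}(x,y)$ for all $x,y\in[N]$. A function $f$ is increasing if $\sigma\succeq\sigma'$ implies $f(\sigma)\ge f(\sigma')$; a measure $\mu$ stochastically dominates $\nu$ if $\mu(A)\ge\nu(A)$ for every set $A$ that is increasing (upward closed) for $\succeq$. A censoring scheme is a càdlàg map $\mathcal C:[0,\infty)\to\mathcal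 P(E)$, $E=\{\{x,x+1\}:x\in[N-1]\}$. Censored dynamics: when at time $t$ the clock of an interval $\mathcal I=[i,j]$ rings, if no edge $\{x,x+1\}\in\mathcal C_t$ has both endpoints in $\mathcal I$, the cards in $\mathcal I$ are uniformly reshuffled as usual; otherwise $\mathcal I$ is split into the maximal subintervals $[i_m,i_{m+1}-1]$ separated by the censored edges $\{i_m-1,i_m\}\in\mathcal C_t$, and the cards in each subinterval are independently uniformly reshuffled within that subinterval. *)

theory Defs
  imports "HOL-Combinatorics.Permutations" Complex_Main
begin

text \<open>Arrangements of N cards: sigma z is the label of the card at position z.\<close>
definition perms :: "nat \<Rightarrow> (nat \<Rightarrow> nat) set" where
  "perms N = {\<sigma>. \<sigma> permutes {1..N}}"

definition mu :: "nat \<Rightarrow> (nat \<Rightarrow> nat) \<Rightarrow> real" where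
  "mu N \<sigma> = 1 / real (fact N)"

definition is_distribution :: "nat \<Rightarrow> ((nat \<Rightarrow> nat) \<Rightarrow> real) \<Rightarrow> bool" where
  "is_distribution N \<nu> \<longleftrightarrow> (\<forall>\<sigma>\<in>perms N. 0 \<le> \<nu> \<sigma>) \<and> (\<Sum>\<sigma>\<in>perms N. \<nu> \<sigma>) = 1"

definition height :: "nat \<Rightarrow> (nat \<Rightarrow> nat) \<Rightarrow> nat \<Rightarrow> nat \<Rightarrow> real" where
  "height N \<sigma> x y = real (card {z\<in>{1..x}. \<sigma> z \<le> y}) - real x * real y / real N"

definition succeq :: "nat \<Rightarrow> (nat \<Rightarrow> nat) \<Rightarrow> (nat \<Rightarrow> nat) \<Rightarrow> bool" where
  "succeq N \<sigma> \<sigma>' \<longleftrightarrow> (\<forall>x\<in>{1..N}. \<forall>y\<in>{1..N}. height N \<sigma> x y \<ge> height N \<sigma>' x y)"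

definition increasing_fun :: "nat \<Rightarrow> ((nat \<Rightarrow> nat) \<Rightarrow> real) \<Rightarrow> bool" where
  "increasing_fun N f \<longleftrightarrow>
     (\<forall>\<sigma>\<in>perms N. \<forall>\<sigma>'\<in>perms N. succeq N \<sigma> \<sigma>' \<longrightarrow> f \<sigma> \<ge> f \<sigma>')"

definition increasing_set :: "nat \<Rightarrow> (nat \<Rightarrow> nat) set \<Rightarrow> bool" where
  "increasing_set N A \<longleftrightarrow> A \<subseteq> perms N \<and>
     (\<forall>\<sigma>\<in>A. \<forall>\<sigma>'\<in>perms N. succeq N \<sigma>' \<sigma> \<longrightarrow> \<sigma>' \<in> A)"

definition stoch_dom :: "nat \<Rightarrow> ((nat \<Rightarrow> nat) \<Rightarrow> real) \<Rightarrow> ((nat \<Rightarrow> nat) \<Rightarrow> real) \<Rightarrow> bool" where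
  "stoch_dom N \<mu>' \<nu> \<longleftrightarrow>
     (\<forall>A. increasing_set N A \<longrightarrow> (\<Sum>\<sigma>\<in>A. \<mu>' \<sigma>) \<ge> (\<Sum>\<sigma>\<in>A. \<nu> \<sigma>))"

text \<open>Censoring schemes: the edge {x,x+1} is encoded by x; C t is a set of such x.
  Cadlag for a map into the discrete finite space P(E): right-continuous (locally constant
  to the right) with left limits (locally constant to the left).\<close>
definition censoring_scheme :: "nat \<Rightarrow> (real \<Rightarrow> nat set) \<Rightarrow> bool" where
  "censoring_scheme N C \<longleftrightarrow>
     (\<forall>t\<ge>0. C t \<subseteq> {1..<N}) \<and>
     (\<forall>t\<ge>0. \<exists>\<epsilon>>0. \<forall>s. t \<le> s \<and> s < t + \<epsilon> \<longrightarrow> C s = C t) \<and>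
     (\<forall>t>0. \<exists>\<epsilon>>0. \<exists>L. \<forall>s. t - \<epsilon> < s \<and> s < t \<longrightarrow> C s = L)"

definition block :: "nat \<Rightarrow> nat \<Rightarrow> nat set" where
  "block k i = {i..i + k - 1}"

text \<open>Two positions lie in the same maximal subinterval iff no censored edge separates them.\<close>
definition same_piece :: "nat set \<Rightarrow> nat \<Rightarrow> nat \<Rightarrow> bool" where
  "same_piece E a b \<longleftrightarrow> (\<forall>z. min a b \<le> z \<and> z < max a b \<longrightarrow> z \<notin> E)"

text \<open>Rearrangements used when the clock of block i rings while E is censored: uniform
  over the permutations of the block preserving each maximal subinterval (= independent
  uniform reshuffles of the subintervals; = uniform element of S_k if E cuts nothing).\<close>
definition shuffle_group :: "nat set \<Rightarrow> nat \<Rightarrow> nat \<Rightarrow> (nat \<Rightarrow> nat) set" where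
  "shuffle_group E k i = {\<pi>. \<pi> permutes block k i \<and> (\<forall>z\<in>block k i. same_piece E z (\<pi> z))}"

text \<open>One update of the law: the cards in positions of the block are rearranged by pi.\<close>
definition step :: "nat \<Rightarrow> nat set \<Rightarrow> nat \<Rightarrow> nat \<Rightarrow> ((nat \<Rightarrow> nat) \<Rightarrow> real) \<Rightarrow> (nat \<Rightarrow> nat) \<Rightarrow> real" where
  "step N E k i \<nu> \<tau> =
     (\<Sum>\<sigma>\<in>perms N. \<nu> \<sigma> * real (card {\<pi>\<in>shuffle_group E k i. \<tau> = \<sigma> \<circ> \<pi>})
                           / real (card (shuffle_group E k i)))"

text \<open>A realization of the update times: a finite list of (ring time, block index),
  strictly increasing in time (covers all rings up to any horizon).\<close>
definition update_times :: "nat \<Rightarrow> nat \<Rightarrow> (real \<times> nat) list \<Rightarrow> bool" where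
  "update_times N k us \<longleftrightarrow> sorted_wrt (\<lambda>a b. fst a < fst b) us \<and>
     (\<forall>u\<in>set us. 0 \<le> fst u \<and> 1 \<le> snd u \<and> snd u + k \<le> N + 1)"

definition law :: "nat \<Rightarrow> nat \<Rightarrow> (real \<Rightarrow> nat set) \<Rightarrow> ((nat \<Rightarrow> nat) \<Rightarrow> real)
                    \<Rightarrow> (real \<times> nat) list \<Rightarrow> real \<Rightarrow> (nat \<Rightarrow> nat) \<Rightarrow> real" where
  "law N k C \<nu>0 us t = foldl (\<lambda>\<nu> u. step N (C (fst u)) k (snd u) \<nu>) \<nu>0
                          (filter (\<lambda>u. fst u \<le> t) us)"

end

theory Submission
  imports Defs "HOL-Analysis.Analysis"
begin


definition cnt :: "(nat \<Rightarrow> nat) \<Rightarrow> nat \<Rightarrow> nat \<Rightarrow> nat" where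
  "cnt \<tau> x y = card {z\<in>{1..x}. \<tau> z \<le> y}"

lemma succeq_cnt:
  "succeq N a b \<longleftrightarrow> (\<forall>x\<in>{1..N}. \<forall>y\<in>{1..N}. cnt b x y \<le> cnt a x y)"
  unfolding succeq_def height_def cnt_def by auto

lemma cnt_0[simp]: "cnt \<tau> 0 y = 0"
  unfolding cnt_def by auto

lemma cnt_Suc: "cnt \<tau> (Suc x) y = cnt \<tau> x y + (if \<tau> (Suc x) \<le> y then 1 else 0)"
proof -
  have "{z\<in>{1..Suc x}. \<tau> z \<le> y} = (if \<tau> (Suc x) \<le> y then insert (Suc x) {z\<in>{1..x}. \<tau> z \<le> y}
        else {z\<in>{1..x}. \<tau> z \<le> y})" by (auto simp: le_Suc_eq)
  then show ?thesis unfolding cnt_def by auto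
qed

lemma cnt_swap_other:
  assumes "1 \<le> z" "x \<noteq> z"
  shows "cnt (\<tau> \<circ> Transposition.transpose z (Suc z)) x y = cnt \<tau> x y"
proof -
  let ?t = "Transposition.transpose z (Suc z)"
  have "{w\<in>{1..x}. (\<tau> \<circ> ?t) w \<le> y} = ?t ` {w\<in>{1..x}. \<tau> w \<le> y}"
  proof (rule set_eqI)
    fix w
    have mem: "?t w \<in> {1..x} \<longleftrightarrow> w \<in> {1..x}"
      using assms by (auto simp: Transposition.transpose_def)
    show "w \<in> {w\<in>{1..x}. (\<tau> \<circ> ?t) w \<le> y} \<longleftrightarrow> w \<in> ?t ` {w\<in>{1..x}. \<tau> w \<le> y}"
    proof
      assume "w \<in> {w\<in>{1..x}. (\<tau> \<circ> ?t) w \<le> y}"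
      then have "?t w \<in> {w\<in>{1..x}. \<tau> w \<le> y}" using mem by auto
      then show "w \<in> ?t ` {w\<in>{1..x}. \<tau> w \<le> y}"
        by (metis (no_types, lifting) image_eqI transpose_involutory)
    next
      assume "w \<in> ?t ` {w\<in>{1..x}. \<tau> w \<le> y}"
      then obtain v where v: "v \<in> {w\<in>{1..x}. \<tau> w \<le> y}" "w = ?t v" by auto
      have "?t w = v" using v by simp
      then show "w \<in> {w\<in>{1..x}. (\<tau> \<circ> ?t) w \<le> y}" using v mem by auto
    qed
  qed
  moreover have "inj ?t" by (metis inj_on_inverseI transpose_involutory)
  ultimately show ?thesis unfolding cnt_def
    by (simp add: card_image inj_on_subset)
qed

definition hi :: "nat \<Rightarrow> (nat \<Rightarrow> nat) \<Rightarrow> (nat \<Rightarrow> nat)" where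
  "hi z \<sigma> = (if \<sigma> z \<le> \<sigma> (Suc z) then \<sigma> else \<sigma> \<circ> Transposition.transpose z (Suc z))"
definition lo :: "nat \<Rightarrow> (nat \<Rightarrow> nat) \<Rightarrow> (nat \<Rightarrow> nat)" where
  "lo z \<sigma> = (if \<sigma> z \<le> \<sigma> (Suc z) then \<sigma> \<circ> Transposition.transpose z (Suc z) else \<sigma>)"

lemma cnt_hi_other: "1 \<le> z \<Longrightarrow> x \<noteq> z \<Longrightarrow> cnt (hi z \<sigma>) x y = cnt \<sigma> x y"
  unfolding hi_def by (simp add: cnt_swap_other)
lemma cnt_lo_other: "1 \<le> z \<Longrightarrow> x \<noteq> z \<Longrightarrow> cnt (lo z \<sigma>) x y = cnt \<sigma> x y"
  unfolding lo_def by (simp add: cnt_swap_other)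

lemma cnt_hi_z:
  assumes "1 \<le> z"
  shows "cnt (hi z \<sigma>) z y = cnt \<sigma> (z - 1) y + (if min (\<sigma> z) (\<sigma> (Suc z)) \<le> y then 1 else 0)"
proof -
  obtain z' where z': "z = Suc z'" using assms by (cases z) auto
  have "cnt (hi z \<sigma>) z' y = cnt \<sigma> z' y" using cnt_hi_other[of z z' \<sigma> y] z' by simp
  moreover have "hi z \<sigma> z = min (\<sigma> z) (\<sigma> (Suc z))"
    unfolding hi_def by auto
  ultimately show ?thesis using z' by (simp add: cnt_Suc)
qed

lemma cnt_lo_z:
  assumes "1 \<le> z"
  shows "cnt (lo z \<sigma>) z y = cnt \<sigma> (z - 1) y + (if max (\<sigma> z) (\<sigma> (Suc z)) \<le> y then 1 else 0)"
proof -
  obtain z' where z': "z = Suc z'" using assms by (cases z) auto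
  have "cnt (lo z \<sigma>) z' y = cnt \<sigma> z' y" using cnt_lo_other[of z z' \<sigma> y] z' by simp
  moreover have "lo z \<sigma> z = max (\<sigma> z) (\<sigma> (Suc z))"
    unfolding lo_def by auto
  ultimately show ?thesis using z' by (simp add: cnt_Suc)
qed

lemma cnt_z1:
  assumes "1 \<le> z"
  shows "cnt \<sigma> (Suc z) y = cnt \<sigma> (z - 1) y + (if \<sigma> z \<le> y then 1 else 0) + (if \<sigma> (Suc z) \<le> y then 1 else 0)"
proof -
  obtain z' where z': "z = Suc z'" using assms by (cases z) auto
  show ?thesis using z' by (simp add: cnt_Suc)
qed

lemma cnt_le_prev: "1 \<le> z \<Longrightarrow> z \<le> N \<Longrightarrow> y \<in> {1..N} \<Longrightarrow> succeq N a b \<Longrightarrow> cnt b (z - 1) y \<le> cnt a (z - 1) y"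
proof (cases "z = 1")
  case False
  assume "1 \<le> z" "z \<le> N" "y \<in> {1..N}" "succeq N a b"
  then have "z - 1 \<in> {1..N}" using False by auto
  then show ?thesis using \<open>y \<in> {1..N}\<close> \<open>succeq N a b\<close> by (auto simp: succeq_cnt)
qed simp

lemma hi_mono:
  assumes "1 \<le> z" "Suc z \<le> N" "succeq N a b"
  shows "succeq N (hi z a) (hi z b)"
  unfolding succeq_cnt
proof (intro ballI)
  fix x y assume x: "x \<in> {1..N}" and y: "y \<in> {1..N}"
  show "cnt (hi z b) x y \<le> cnt (hi z a) x y"
  proof (cases "x = z")
    case True
    have p: "cnt b (z - 1) y \<le> cnt a (z - 1) y" using cnt_le_prev[of z N y a b] assms y by simp
    have q: "cnt b (Suc z) y \<le> cnt a (Suc z) y" using assms y by (auto simp: succeq_cnt)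
    show ?thesis using p q unfolding True cnt_hi_z[OF assms(1)] cnt_z1[OF assms(1)]
      by (auto simp: min_le_iff_disj split: if_splits)
  next
    case False
    then show ?thesis using assms x y by (simp add: cnt_hi_other succeq_cnt)
  qed
qed

lemma lo_mono:
  assumes "1 \<le> z" "Suc z \<le> N" "succeq N a b"
  shows "succeq N (lo z a) (lo z b)"
  unfolding succeq_cnt
proof (intro ballI)
  fix x y assume x: "x \<in> {1..N}" and y: "y \<in> {1..N}"
  show "cnt (lo z b) x y \<le> cnt (lo z a) x y"
  proof (cases "x = z")
    case True
    have p: "cnt b (z - 1) y \<le> cnt a (z - 1) y" using cnt_le_prev[of z N y a b] assms y by simp
    have q: "cnt b (Suc z) y \<le> cnt a (Suc z) y" using assms y by (auto simp: succeq_cnt)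
    show ?thesis using p q unfolding True cnt_lo_z[OF assms(1)] cnt_z1[OF assms(1)]
      by (auto simp: min_le_iff_disj split: if_splits)
  next
    case False
    then show ?thesis using assms x y by (simp add: cnt_lo_other succeq_cnt)
  qed
qed

lemma hi_lo:
  assumes "1 \<le> z"
  shows "succeq N (hi z a) (lo z a)"
  unfolding succeq_cnt
proof (intro ballI)
  fix x y assume x: "x \<in> {1..N}" and y: "y \<in> {1..N}"
  show "cnt (lo z a) x y \<le> cnt (hi z a) x y"
  proof (cases "x = z")
    case True
    show ?thesis unfolding True cnt_lo_z[OF assms(1)] cnt_hi_z[OF assms(1)]
      by (auto simp: min_le_iff_disj split: if_splits)
  next
    case False
    then show ?thesis using assms by (simp add: cnt_lo_other cnt_hi_other)
  qed
qed



abbreviation tr :: "nat \<Rightarrow> nat \<Rightarrow> nat" where "tr z \<equiv> Transposition.transpose z (Suc z)"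

lemma tr_tr[simp]: "\<sigma> \<circ> tr z \<circ> tr z = \<sigma>"
  by (simp add: comp_assoc)

lemma perms_finite: "finite (perms N)"
  unfolding perms_def using finite_permutations[of "{1..N}"] by simp

lemma perms_tr: "\<sigma> \<in> perms N \<Longrightarrow> 1 \<le> z \<Longrightarrow> Suc z \<le> N \<Longrightarrow> \<sigma> \<circ> tr z \<in> perms N"
  unfolding perms_def by (auto intro!: permutes_compose permutes_swap_id)

lemma perms_tr_iff: "1 \<le> z \<Longrightarrow> Suc z \<le> N \<Longrightarrow> \<sigma> \<circ> tr z \<in> perms N \<longleftrightarrow> \<sigma> \<in> perms N"
  using perms_tr[of \<sigma> N z] perms_tr[of "\<sigma> \<circ> tr z" N z] by auto

lemma hi_in: "\<sigma> \<in> perms N \<Longrightarrow> 1 \<le> z \<Longrightarrow> Suc z \<le> N \<Longrightarrow> hi z \<sigma> \<in> perms N"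
  unfolding hi_def by (auto intro: perms_tr)
lemma lo_in: "\<sigma> \<in> perms N \<Longrightarrow> 1 \<le> z \<Longrightarrow> Suc z \<le> N \<Longrightarrow> lo z \<sigma> \<in> perms N"
  unfolding lo_def by (auto intro: perms_tr)

lemma hi_lo_sum: "(f::(nat\<Rightarrow>nat)\<Rightarrow>real) \<sigma> + f (\<sigma> \<circ> tr z) = f (hi z \<sigma>) + f (lo z \<sigma>)"
  unfolding hi_def lo_def by auto

lemma comparable:
  assumes "1 \<le> z"
  shows "succeq N \<sigma> (\<sigma> \<circ> tr z) \<or> succeq N (\<sigma> \<circ> tr z) \<sigma>"
  using hi_lo[OF assms, of N \<sigma>] unfolding hi_def lo_def by (auto split: if_splits)

definition Az :: "nat \<Rightarrow> ((nat \<Rightarrow> nat) \<Rightarrow> real) \<Rightarrow> (nat \<Rightarrow> nat) \<Rightarrow> real" where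
  "Az z f \<sigma> = (f \<sigma> + f (\<sigma> \<circ> tr z)) / 2"

lemma Az_incr:
  assumes "increasing_fun N f" "1 \<le> z" "Suc z \<le> N"
  shows "increasing_fun N (Az z f)"
  unfolding increasing_fun_def
proof (intro ballI impI)
  fix \<sigma> \<sigma>' assume s: "\<sigma> \<in> perms N" "\<sigma>' \<in> perms N" "succeq N \<sigma> \<sigma>'"
  have "f (hi z \<sigma>') \<le> f (hi z \<sigma>)"
    using assms s hi_mono[OF assms(2,3) s(3)] hi_in unfolding increasing_fun_def by blast
  moreover have "f (lo z \<sigma>') \<le> f (lo z \<sigma>)"
    using assms s lo_mono[OF assms(2,3) s(3)] lo_in unfolding increasing_fun_def by blast
  ultimately show "Az z f \<sigma>' \<le> Az z f \<sigma>"
    unfolding Az_def using hi_lo_sum[of f \<sigma> z] hi_lo_sum[of f \<sigma>' z] by simp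
qed

lemma Az_sum:
  assumes "increasing_fun N f" "increasing_set N S" "1 \<le> z" "Suc z \<le> N"
  shows "sum (Az z f) S \<le> sum f S"
proof -
  have SP: "S \<subseteq> perms N" using assms(2) unfolding increasing_set_def by auto
  have fin: "finite S" using SP perms_finite finite_subset by blast
  define S1 where "S1 = {\<sigma>\<in>S. \<sigma> \<circ> tr z \<in> S}"
  define S2 where "S2 = {\<sigma>\<in>S. \<sigma> \<circ> tr z \<notin> S}"
  have split: "S = S1 \<union> S2" "S1 \<inter> S2 = {}" unfolding S1_def S2_def by auto
  have fin1: "finite S1" "finite S2" using fin unfolding S1_def S2_def by auto
  have e1: "(\<Sum>\<sigma>\<in>S1. f (\<sigma> \<circ> tr z)) = (\<Sum>\<sigma>\<in>S1. f \<sigma>)"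
    by (rule sum.reindex_bij_witness[of _ "\<lambda>\<sigma>. \<sigma> \<circ> tr z" "\<lambda>\<sigma>. \<sigma> \<circ> tr z"])
       (auto simp: S1_def)
  have e2: "(\<Sum>\<sigma>\<in>S2. f (\<sigma> \<circ> tr z)) \<le> (\<Sum>\<sigma>\<in>S2. f \<sigma>)"
  proof (rule sum_mono)
    fix \<sigma> assume "\<sigma> \<in> S2"
    then have s: "\<sigma> \<in> S" "\<sigma> \<circ> tr z \<notin> S" unfolding S2_def by auto
    have sP: "\<sigma> \<in> perms N" "\<sigma> \<circ> tr z \<in> perms N" using s SP perms_tr assms by auto
    have "\<not> succeq N (\<sigma> \<circ> tr z) \<sigma>" using s sP assms(2) unfolding increasing_set_def by blast
    then have "succeq N \<sigma> (\<sigma> \<circ> tr z)" using comparable[OF assms(3)] by blast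
    then show "f (\<sigma> \<circ> tr z) \<le> f \<sigma>" using assms(1) sP unfolding increasing_fun_def by blast
  qed
  have "(\<Sum>\<sigma>\<in>S. f (\<sigma> \<circ> tr z)) \<le> (\<Sum>\<sigma>\<in>S. f \<sigma>)"
    using e1 e2 split fin1 by (simp add: sum.union_disjoint)
  then show ?thesis unfolding Az_def by (simp add: sum_divide_distrib[symmetric] sum.distrib)
qed



lemma same_piece_refl[simp]: "same_piece E a a"
  unfolding same_piece_def by auto
lemma same_piece_sym: "same_piece E a b \<Longrightarrow> same_piece E b a"
  unfolding same_piece_def by (auto simp: min.commute max.commute)
lemma same_piece_trans: "same_piece E a b \<Longrightarrow> same_piece E b c \<Longrightarrow> same_piece E a c"
proof -
  assume h1: "same_piece E a b" and h2: "same_piece E b c"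
  have "\<forall>z::nat. min a c \<le> z \<and> z < max a c \<longrightarrow> (min a b \<le> z \<and> z < max a b) \<or> (min b c \<le> z \<and> z < max b c)"
    by arith
  then show ?thesis using h1 h2 unfolding same_piece_def by blast
qed

lemma descent:
  fixes \<pi> :: "nat \<Rightarrow> nat"
  shows "a < b \<Longrightarrow> \<pi> b < \<pi> a \<Longrightarrow> \<exists>z. a \<le> z \<and> z < b \<and> \<pi> (Suc z) < \<pi> z"
proof (induction b)
  case 0 then show ?case by simp
next
  case (Suc b)
  show ?case
  proof (cases "\<pi> (Suc b) < \<pi> b")
    case True then show ?thesis using Suc.prems by (intro exI[of _ b]) auto
  next
    case False
    then have "a \<noteq> b" using Suc.prems by auto
    then have "a < b" using Suc.prems by auto
    then obtain z where "a \<le> z \<and> z < b \<and> \<pi> (Suc z) < \<pi> z" using Suc False by fastforce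
    then show ?thesis by (intro exI[of _ z]) auto
  qed
qed

locale blk =
  fixes N k i :: nat and E :: "nat set"
  assumes i1: "1 \<le> i" and ik: "i + k \<le> N + 1"
begin

abbreviation "B \<equiv> block k i"
abbreviation "G \<equiv> shuffle_group E k i"
abbreviation "P \<equiv> perms N"

lemma B_sub: "B \<subseteq> {1..N}"
  using i1 ik unfolding block_def by auto

lemma G_perm: "\<pi> \<in> G \<Longrightarrow> \<pi> permutes B"
  unfolding shuffle_group_def by auto

lemma G_permN: "\<pi> \<in> G \<Longrightarrow> \<pi> permutes {1..N}"
  using G_perm B_sub permutes_subset by blast

lemma G_id: "id \<in> G"
  unfolding shuffle_group_def by (auto simp: permutes_id)

lemma G_inv: assumes "\<pi> \<in> G" shows "inv \<pi> \<in> G"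
proof -
  have p: "\<pi> permutes B" using assms G_perm by auto
  have "same_piece E z (inv \<pi> z)" if "z \<in> B" for z
  proof -
    have "inv \<pi> z \<in> B" using permutes_in_image[OF permutes_inv[OF p]] that by simp
    then have "same_piece E (inv \<pi> z) (\<pi> (inv \<pi> z))" using assms unfolding shuffle_group_def by auto
    then show ?thesis using permutes_inverses(1)[OF p, of z] same_piece_sym by simp
  qed
  then show ?thesis unfolding shuffle_group_def using permutes_inv[OF p] by auto
qed

lemma G_comp: assumes "\<pi> \<in> G" "\<rho> \<in> G" shows "\<pi> \<circ> \<rho> \<in> G"
proof -
  have p: "\<pi> permutes B" "\<rho> permutes B" using assms G_perm by auto
  have "same_piece E z ((\<pi> \<circ> \<rho>) z)" if "z \<in> B" for z
  proof -
    have "\<rho> z \<in> B" using permutes_in_image[OF p(2)] that by simp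
    then have a1: "same_piece E (\<rho> z) (\<pi> (\<rho> z))" using assms unfolding shuffle_group_def by auto
    have a2: "same_piece E z (\<rho> z)" using assms that unfolding shuffle_group_def by auto
    show ?thesis using same_piece_trans[OF a2 a1] by simp
  qed
  then show ?thesis unfolding shuffle_group_def using permutes_compose[OF p(2) p(1)] by auto
qed

lemma G_finite: "finite G"
proof -
  have "G \<subseteq> {\<pi>. \<pi> permutes B}" unfolding shuffle_group_def by auto
  moreover have "finite {\<pi>. \<pi> permutes B}" by (rule finite_permutations) (simp add: block_def)
  ultimately show ?thesis using finite_subset by blast
qed

lemma G_card_pos: "card G > 0"
  using G_finite G_id card_gt_0_iff by blast

lemma P_comp: "\<sigma> \<in> P \<Longrightarrow> \<pi> \<in> G \<Longrightarrow> \<sigma> \<circ> \<pi> \<in> P"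
  unfolding perms_def using G_permN permutes_compose by blast

lemma tr_G: assumes "z \<in> B" "Suc z \<in> B" "z \<notin> E" shows "tr z \<in> G"
proof -
  have "same_piece E w (tr z w)" if "w \<in> B" for w
  proof -
    have "same_piece E z (Suc z)" using assms unfolding same_piece_def by (fastforce simp: less_Suc_eq_le)
    then show ?thesis by (cases "w = z"; cases "w = Suc z") (auto simp: same_piece_sym)
  qed
  then show ?thesis unfolding shuffle_group_def using permutes_swap_id[OF assms(1,2)] by auto
qed

lemma descent_G:
  assumes "\<pi> \<in> G" "\<pi> \<noteq> id"
  shows "\<exists>z. z \<in> B \<and> Suc z \<in> B \<and> z \<notin> E \<and> \<pi> (Suc z) < \<pi> z"
proof -
  have p: "\<pi> permutes B" using assms G_perm by auto
  define M where "M = {w. \<pi> w \<noteq> w}"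
  have MB: "M \<subseteq> B" unfolding M_def using permutes_not_in[OF p] by auto
  have finM: "finite M" using MB finite_subset by (auto simp: block_def)
  have Mne: "M \<noteq> {}" using assms(2) unfolding M_def by auto
  define a where "a = Min M"
  have aM: "a \<in> M" using finM Mne a_def by auto
  have amin: "\<And>w. w \<in> M \<Longrightarrow> a \<le> w" using finM a_def by auto
  have inj: "inj \<pi>" using permutes_inj[OF p] .
  have "\<not> \<pi> a < a"
  proof
    assume "\<pi> a < a"
    then have "\<pi> a \<notin> M" using amin by force
    then have "\<pi> (\<pi> a) = \<pi> a" unfolding M_def by auto
    then have "\<pi> a = a" using inj by (auto dest: injD)
    then show False using aM unfolding M_def by auto
  qed
  then have ga: "a < \<pi> a" using aM unfolding M_def by auto
  define b where "b = inv \<pi> a"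
  have pb: "\<pi> b = a" unfolding b_def using permutes_inverses(1)[OF p] by simp
  have "b \<noteq> a" using pb aM unfolding M_def by auto
  moreover have "\<not> b < a"
  proof
    assume "b < a"
    then have "b \<notin> M" using amin by force
    then have "\<pi> b = b" unfolding M_def by auto
    then show False using pb \<open>b < a\<close> by simp
  qed
  ultimately have ab: "a < b" by auto
  have aB: "a \<in> B" using aM MB by auto
  have bB: "b \<in> B" using pb aB permutes_in_image[OF p, of b] by simp
  obtain z where z: "a \<le> z" "z < b" "\<pi> (Suc z) < \<pi> z" using descent[OF ab, of \<pi>] pb ga by auto
  have zB: "z \<in> B" "Suc z \<in> B" using z aB bB by (auto simp: block_def)
  have "z \<notin> E"
  proof
    assume zE: "z \<in> E"
    have s1: "same_piece E z (\<pi> z)" using assms(1) zB unfolding shuffle_group_def by auto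
    have s2: "same_piece E (Suc z) (\<pi> (Suc z))" using assms(1) zB unfolding shuffle_group_def by auto
    have "\<pi> z \<le> z"
    proof (rule ccontr)
      assume "\<not> \<pi> z \<le> z"
      then show False using s1 zE unfolding same_piece_def by auto
    qed
    moreover have "Suc z \<le> \<pi> (Suc z)"
    proof (rule ccontr)
      assume "\<not> Suc z \<le> \<pi> (Suc z)"
      then show False using s2 zE unfolding same_piece_def by auto
    qed
    ultimately show False using z by auto
  qed
  then show ?thesis using zB z by auto
qed

definition W :: "(nat \<Rightarrow> nat) \<Rightarrow> nat" where
  "W \<pi> = (\<Sum>w\<in>B. w * \<pi> w)"

lemma sum_split2:
  assumes "z \<in> B" "Suc z \<in> B"
  shows "sum g B = g z + g (Suc z) + sum g (B - {z, Suc z})"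
proof -
  have fin: "finite B" by (simp add: block_def)
  have "sum g B = g z + sum g (B - {z})" using sum.remove[OF fin assms(1)] .
  moreover have "sum g (B - {z}) = g (Suc z) + sum g (B - {z} - {Suc z})"
    using sum.remove[of "B - {z}" "Suc z" g] fin assms by auto
  moreover have "B - {z} - {Suc z} = B - {z, Suc z}" by auto
  ultimately show ?thesis by (simp add: add.assoc)
qed

lemma W_tr:
  assumes "z \<in> B" "Suc z \<in> B"
  shows "W (\<pi> \<circ> tr z) + \<pi> (Suc z) = W \<pi> + \<pi> z"
proof -
  have "sum (\<lambda>w. w * (\<pi> \<circ> tr z) w) (B - {z, Suc z}) = sum (\<lambda>w. w * \<pi> w) (B - {z, Suc z})"
    by (rule sum.cong) auto
  then show ?thesis unfolding W_def sum_split2[OF assms, of "\<lambda>w. w * (\<pi> \<circ> tr z) w"]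
      sum_split2[OF assms, of "\<lambda>w. w * \<pi> w"]
    by (simp add: algebra_simps)
qed

definition Wmax :: nat where "Wmax = (\<Sum>w\<in>B. w * (i + k))"

lemma W_le: "\<pi> \<in> G \<Longrightarrow> W \<pi> \<le> Wmax"
  unfolding W_def Wmax_def
proof (rule sum_mono)
  fix w assume "\<pi> \<in> G" "w \<in> B"
  then have "\<pi> w \<in> B" using permutes_in_image[OF G_perm] by simp
  then have "\<pi> w \<le> i + k" by (auto simp: block_def)
  then show "w * \<pi> w \<le> w * (i + k)" by simp
qed

lemma generation_aux:
  assumes inv: "\<And>\<sigma> z. \<sigma> \<in> P \<Longrightarrow> z \<in> B \<Longrightarrow> Suc z \<in> B \<Longrightarrow> z \<notin> E \<Longrightarrow> h (\<sigma> \<circ> tr z) = h \<sigma>"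
  shows "\<forall>\<pi>\<in>G. Wmax - W \<pi> = n \<longrightarrow> (\<forall>\<sigma>\<in>P. h (\<sigma> \<circ> \<pi>) = h \<sigma>)"
proof (induction n rule: less_induct)
  case (less n)
  show ?case
  proof (intro ballI impI)
    fix \<pi> \<sigma> assume pG: "\<pi> \<in> G" and n: "Wmax - W \<pi> = n" and sP: "\<sigma> \<in> P"
    show "h (\<sigma> \<circ> \<pi>) = h \<sigma>"
    proof (cases "\<pi> = id")
      case True then show ?thesis by simp
    next
      case False
      obtain z where z: "z \<in> B" "Suc z \<in> B" "z \<notin> E" "\<pi> (Suc z) < \<pi> z"
        using descent_G[OF pG False] by auto
      define \<pi>' where "\<pi>' = \<pi> \<circ> tr z"
      have p'G: "\<pi>' \<in> G" unfolding \<pi>'_def using G_comp[OF pG tr_G[OF z(1-3)]] .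
      have "W \<pi>' + \<pi> (Suc z) = W \<pi> + \<pi> z" unfolding \<pi>'_def by (rule W_tr[OF z(1,2)])
      then have "W \<pi> < W \<pi>'" using z(4) by linarith
      moreover have "W \<pi>' \<le> Wmax" using W_le[OF p'G] .
      ultimately have "Wmax - W \<pi>' < n" using n by linarith
      then have IH: "\<forall>\<sigma>\<in>P. h (\<sigma> \<circ> \<pi>') = h \<sigma>" using less.IH p'G by blast
      have "\<sigma> \<circ> \<pi> = (\<sigma> \<circ> \<pi>') \<circ> tr z" unfolding \<pi>'_def by (simp add: comp_assoc)
      moreover have "\<sigma> \<circ> \<pi>' \<in> P" using P_comp[OF sP p'G] .
      ultimately have "h (\<sigma> \<circ> \<pi>) = h (\<sigma> \<circ> \<pi>')" using inv z by simp
      then show ?thesis using IH sP by simp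
    qed
  qed
qed

lemma generation:
  assumes "\<And>\<sigma> z. \<sigma> \<in> P \<Longrightarrow> z \<in> B \<Longrightarrow> Suc z \<in> B \<Longrightarrow> z \<notin> E \<Longrightarrow> h (\<sigma> \<circ> tr z) = h \<sigma>"
    and "\<pi> \<in> G" "\<sigma> \<in> P"
  shows "h (\<sigma> \<circ> \<pi>) = h \<sigma>"
proof -
  have "\<forall>\<pi>'\<in>G. Wmax - W \<pi>' = Wmax - W \<pi> \<longrightarrow> (\<forall>\<sigma>\<in>P. h (\<sigma> \<circ> \<pi>') = h \<sigma>)"
    by (rule generation_aux[OF assms(1)])
  then show ?thesis using assms(2,3) by blast
qed

end



definition avg :: "(nat \<Rightarrow> nat) set \<Rightarrow> ((nat \<Rightarrow> nat) \<Rightarrow> real) \<Rightarrow> (nat \<Rightarrow> nat) \<Rightarrow> real" where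
  "avg G f \<sigma> = (\<Sum>\<pi>\<in>G. f (\<sigma> \<circ> \<pi>)) / real (card G)"

lemma cont_coord: "continuous_on S (\<lambda>h::('a \<Rightarrow> real). h x)"
  by (rule continuous_on_subset[OF continuous_on_product_coordinates]) simp

lemma open_const: "open {x::'a::topological_space. c}"
  by (cases c) auto

lemma sum_P_tr:
  assumes "1 \<le> z" "Suc z \<le> N"
  shows "(\<Sum>\<sigma>\<in>perms N. g (\<sigma> \<circ> tr z)) = (\<Sum>\<sigma>\<in>perms N. g \<sigma>)"
  by (rule sum.reindex_bij_witness[of _ "\<lambda>\<sigma>. \<sigma> \<circ> tr z" "\<lambda>\<sigma>. \<sigma> \<circ> tr z"])
     (auto simp: perms_tr_iff[OF assms])

context blk
begin

lemma orbit_tr: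
  assumes "z \<in> B" "Suc z \<in> B" "z \<notin> E"
  shows "(\<Sum>\<pi>\<in>G. g (\<pi> \<circ> tr z)) = (\<Sum>\<pi>\<in>G. g \<pi>)"
proof -
  have t: "tr z \<in> G" using tr_G[OF assms] .
  show ?thesis
    by (rule sum.reindex_bij_witness[of _ "\<lambda>\<sigma>. \<sigma> \<circ> tr z" "\<lambda>\<sigma>. \<sigma> \<circ> tr z"])
       (auto intro: G_comp[OF _ t])
qed

lemma key:
  assumes f: "increasing_fun N f"
  shows "increasing_fun N (avg G f) \<and> (\<forall>S. increasing_set N S \<longrightarrow> sum (avg G f) S \<le> sum f S)"
proof -
  define f' where "f' \<sigma> = (if \<sigma> \<in> P then f \<sigma> else 0)" for \<sigma>
  have Pne: "P \<noteq> {}" unfolding perms_def using permutes_id by blast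
  have finP: "finite P" by (rule perms_finite)
  define lo where "lo = Min (f ` P)"
  define hi where "hi = Max (f ` P)"
  define box where "box \<sigma> = (if \<sigma> \<in> P then {lo..hi} else {0::real})" for \<sigma>
  define V where "V = {h. (\<forall>\<sigma>. h \<sigma> \<in> box \<sigma>) \<and> increasing_fun N h
      \<and> (\<forall>S. increasing_set N S \<longrightarrow> sum h S \<le> sum f S)
      \<and> (\<forall>\<sigma>. \<sigma> \<in> P \<longrightarrow> (\<Sum>\<pi>\<in>G. h (\<sigma> \<circ> \<pi>)) = (\<Sum>\<pi>\<in>G. f (\<sigma> \<circ> \<pi>)))}"
  have SP: "\<And>S. increasing_set N S \<Longrightarrow> S \<subseteq> P" unfolding increasing_set_def by auto
  have "f' \<in> V"
  proof -
    have "\<forall>\<sigma>. f' \<sigma> \<in> box \<sigma>"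
      using finP by (auto simp: f'_def box_def lo_def hi_def)
    moreover have "increasing_fun N f'" using f unfolding increasing_fun_def f'_def by auto
    moreover have "sum f' S \<le> sum f S" if "increasing_set N S" for S
      using SP[OF that] by (auto simp: f'_def intro!: sum.cong eq_refl)
    moreover have "(\<Sum>\<pi>\<in>G. f' (\<sigma> \<circ> \<pi>)) = (\<Sum>\<pi>\<in>G. f (\<sigma> \<circ> \<pi>))" if "\<sigma> \<in> P" for \<sigma>
      using P_comp[OF that] by (auto simp: f'_def intro!: sum.cong)
    ultimately show ?thesis unfolding V_def by auto
  qed
  then have Vne: "V \<noteq> {}" by auto
  have cV: "compact V"
  proof -
    have "compactin (product_topology (\<lambda>_. euclidean) UNIV) (PiE UNIV box)"
      by (subst compactin_PiE) (auto simp: box_def)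
    then have c1: "compact (PiE UNIV box)" by (simp add: euclidean_product_topology)
    have c2: "closed {h::(nat\<Rightarrow>nat)\<Rightarrow>real. \<forall>\<sigma> \<sigma>'. \<sigma> \<in> P \<and> \<sigma>' \<in> P \<and> succeq N \<sigma> \<sigma>' \<longrightarrow> h \<sigma>' \<le> h \<sigma>}"
      by (intro closed_Collect_all closed_Collect_imp open_const closed_Collect_le cont_coord)
    have c3: "closed {h::(nat\<Rightarrow>nat)\<Rightarrow>real. \<forall>S. increasing_set N S \<longrightarrow> sum h S \<le> sum f S}"
      by (intro closed_Collect_all closed_Collect_imp open_const closed_Collect_le
          continuous_on_sum cont_coord continuous_on_const)
    have c4: "closed {h::(nat\<Rightarrow>nat)\<Rightarrow>real. \<forall>\<sigma>. \<sigma> \<in> P \<longrightarrow> (\<Sum>\<pi>\<in>G. h (\<sigma> \<circ> \<pi>)) = (\<Sum>\<pi>\<in>G. f (\<sigma> \<circ> \<pi>))}"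
      by (intro closed_Collect_all closed_Collect_imp open_const closed_Collect_eq
          continuous_on_sum cont_coord continuous_on_const)
    have "V = PiE UNIV box \<inter> {h. \<forall>\<sigma> \<sigma>'. \<sigma> \<in> P \<and> \<sigma>' \<in> P \<and> succeq N \<sigma> \<sigma>' \<longrightarrow> h \<sigma>' \<le> h \<sigma>}
       \<inter> {h. \<forall>S. increasing_set N S \<longrightarrow> sum h S \<le> sum f S}
       \<inter> {h. \<forall>\<sigma>. \<sigma> \<in> P \<longrightarrow> (\<Sum>\<pi>\<in>G. h (\<sigma> \<circ> \<pi>)) = (\<Sum>\<pi>\<in>G. f (\<sigma> \<circ> \<pi>))}"
      unfolding V_def increasing_fun_def by (auto simp: PiE_iff)
    then show ?thesis using c1 c2 c3 c4 by (simp add: compact_Int_closed)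
  qed
  define \<Phi> where "\<Phi> h = (\<Sum>\<sigma>\<in>P. (h \<sigma>)\<^sup>2)" for h :: "(nat\<Rightarrow>nat)\<Rightarrow>real"
  have "continuous_on V \<Phi>" unfolding \<Phi>_def
    by (intro continuous_intros cont_coord)
  then obtain h where hV: "h \<in> V" and hmin: "\<And>h'. h' \<in> V \<Longrightarrow> \<Phi> h \<le> \<Phi> h'"
    using continuous_attains_inf[OF cV Vne] by blast
  have hinc: "increasing_fun N h" using hV unfolding V_def by auto
  have hinv: "h (\<sigma> \<circ> tr z) = h \<sigma>" if sP: "\<sigma> \<in> P" and z: "z \<in> B" "Suc z \<in> B" "z \<notin> E" for \<sigma> z
  proof -
    have z1: "1 \<le> z" "Suc z \<le> N" using z B_sub by auto
    define h' where "h' = Az z h"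
    have "h' \<in> V"
    proof -
      have "h' \<rho> \<in> box \<rho>" for \<rho>
      proof -
        have b1: "h \<rho> \<in> box \<rho>" "h (\<rho> \<circ> tr z) \<in> box (\<rho> \<circ> tr z)" using hV unfolding V_def by auto
        show ?thesis
      proof (cases "\<rho> \<in> P")
        case True
        then have "\<rho> \<circ> tr z \<in> P" using perms_tr z1 by auto
        then show ?thesis using True b1 unfolding h'_def Az_def box_def
          by auto
      next
        case False
        then have "\<rho> \<circ> tr z \<notin> P" using perms_tr_iff z1 by auto
        then show ?thesis using False b1 unfolding h'_def Az_def box_def
          by auto
      qed
      qed
      moreover have "increasing_fun N h'" unfolding h'_def using Az_incr[OF hinc z1] .
      moreover have "sum h' S \<le> sum f S" if "increasing_set N S" for S
        using Az_sum[OF hinc that z1] hV that unfolding V_def h'_def by fastforce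
      moreover have "(\<Sum>\<pi>\<in>G. h' (\<rho> \<circ> \<pi>)) = (\<Sum>\<pi>\<in>G. f (\<rho> \<circ> \<pi>))" if "\<rho> \<in> P" for \<rho>
      proof -
        have "(\<Sum>\<pi>\<in>G. h (\<rho> \<circ> \<pi> \<circ> tr z)) = (\<Sum>\<pi>\<in>G. h (\<rho> \<circ> \<pi>))"
          using orbit_tr[OF z, of "\<lambda>\<pi>. h (\<rho> \<circ> \<pi>)"] by (simp add: comp_assoc)
        then have "(\<Sum>\<pi>\<in>G. h' (\<rho> \<circ> \<pi>)) = (\<Sum>\<pi>\<in>G. h (\<rho> \<circ> \<pi>))"
          unfolding h'_def Az_def by (simp add: sum_divide_distrib[symmetric] sum.distrib)
        then show ?thesis using hV that unfolding V_def by auto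
      qed
      ultimately show ?thesis unfolding V_def by auto
    qed
    then have le: "\<Phi> h \<le> \<Phi> h'" by (rule hmin)
    have pw: "4 * (h' \<rho>)\<^sup>2 + (h \<rho> - h (\<rho> \<circ> tr z))\<^sup>2 = 2 * (h \<rho>)\<^sup>2 + 2 * (h (\<rho> \<circ> tr z))\<^sup>2" for \<rho>
      unfolding h'_def Az_def by (simp add: power2_eq_square algebra_simps)
    have sq: "(\<Sum>\<rho>\<in>P. (h (\<rho> \<circ> tr z))\<^sup>2) = (\<Sum>\<rho>\<in>P. (h \<rho>)\<^sup>2)"
      using sum_P_tr[OF z1, of "\<lambda>\<rho>. (h \<rho>)\<^sup>2"] .
    have "4 * \<Phi> h' + (\<Sum>\<rho>\<in>P. (h \<rho> - h (\<rho> \<circ> tr z))\<^sup>2) = 4 * \<Phi> h"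
    proof -
      have "4 * \<Phi> h' + (\<Sum>\<rho>\<in>P. (h \<rho> - h (\<rho> \<circ> tr z))\<^sup>2)
          = (\<Sum>\<rho>\<in>P. 4 * (h' \<rho>)\<^sup>2 + (h \<rho> - h (\<rho> \<circ> tr z))\<^sup>2)"
        unfolding \<Phi>_def by (simp add: sum.distrib sum_distrib_left)
      also have "\<dots> = (\<Sum>\<rho>\<in>P. 2 * (h \<rho>)\<^sup>2 + 2 * (h (\<rho> \<circ> tr z))\<^sup>2)" using pw by simp
      also have "\<dots> = 4 * \<Phi> h" unfolding \<Phi>_def using sq by (simp add: sum.distrib sum_distrib_left[symmetric])
      finally show ?thesis .
    qed
    then have "(\<Sum>\<rho>\<in>P. (h \<rho> - h (\<rho> \<circ> tr z))\<^sup>2) \<le> 0" using le by linarith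
    then have "(\<Sum>\<rho>\<in>P. (h \<rho> - h (\<rho> \<circ> tr z))\<^sup>2) = 0"
      by (meson order_antisym sum_nonneg zero_le_power2)
    then have "\<forall>\<rho>\<in>P. (h \<rho> - h (\<rho> \<circ> tr z))\<^sup>2 = 0"
      using sum_nonneg_eq_0_iff[OF finP, of "\<lambda>\<rho>. (h \<rho> - h (\<rho> \<circ> tr z))\<^sup>2"] by simp
    then show ?thesis using sP by simp
  qed
  have hG: "h (\<sigma> \<circ> \<pi>) = h \<sigma>" if "\<pi> \<in> G" "\<sigma> \<in> P" for \<pi> \<sigma>
    by (rule generation[OF hinv that]) auto
  have havg: "avg G f \<sigma> = h \<sigma>" if sP: "\<sigma> \<in> P" for \<sigma>
  proof -
    have "(\<Sum>\<pi>\<in>G. f (\<sigma> \<circ> \<pi>)) = (\<Sum>\<pi>\<in>G. h (\<sigma> \<circ> \<pi>))" using hV sP unfolding V_def by auto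
    also have "\<dots> = real (card G) * h \<sigma>" using hG sP by simp
    finally show ?thesis unfolding avg_def using G_card_pos by simp
  qed
  have "increasing_fun N (avg G f)" using hinc havg unfolding increasing_fun_def by simp
  moreover have "sum (avg G f) S \<le> sum f S" if "increasing_set N S" for S
  proof -
    have "sum (avg G f) S = sum h S" using SP[OF that] havg by (auto intro!: sum.cong)
    then show ?thesis using hV that unfolding V_def by auto
  qed
  ultimately show ?thesis by blast
qed

end



lemma card_filter_sum:
  assumes "finite A"
  shows "real (card {x\<in>A. Q x}) = (\<Sum>x\<in>A. if Q x then 1 else 0)"
  using assms by (simp add: sum.inter_filter[symmetric])

lemma sum_P_comp:
  assumes "\<rho> permutes {1..N}"
  shows "(\<Sum>\<sigma>\<in>perms N. g (\<sigma> \<circ> \<rho>)) = (\<Sum>\<sigma>\<in>perms N. g \<sigma>)"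
proof (rule sum.reindex_bij_witness[of _ "\<lambda>\<sigma>. \<sigma> \<circ> inv \<rho>" "\<lambda>\<sigma>. \<sigma> \<circ> \<rho>"])
  fix \<sigma> assume "\<sigma> \<in> perms N"
  then show "\<sigma> \<circ> inv \<rho> \<circ> \<rho> = \<sigma>" "\<sigma> \<circ> inv \<rho> \<in> perms N"
    using permutes_inv_o[OF assms] permutes_compose[OF permutes_inv[OF assms]] unfolding perms_def
    by (auto simp: comp_assoc)
next
  fix \<sigma> assume "\<sigma> \<in> perms N"
  then show "\<sigma> \<circ> \<rho> \<circ> inv \<rho> = \<sigma>" "\<sigma> \<circ> \<rho> \<in> perms N"
    using permutes_inv_o[OF assms] permutes_compose[OF assms] unfolding perms_def
    by (auto simp: comp_assoc)
qed simp

context blk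
begin

lemma sum_G_inv: "(\<Sum>\<pi>\<in>G. g (inv \<pi>)) = (\<Sum>\<pi>\<in>G. g \<pi>)"
  by (rule sum.reindex_bij_witness[of _ inv inv])
     (auto simp: G_inv permutes_inv_inv[OF G_perm])

lemma step_avg:
  assumes tP: "\<tau> \<in> P"
  shows "step N E k i \<nu> \<tau> = avg G \<nu> \<tau>"
proof -
  have finG: "finite G" by (rule G_finite)
  have eq: "(\<tau> = \<sigma> \<circ> \<pi>) \<longleftrightarrow> (\<sigma> = \<tau> \<circ> inv \<pi>)" if "\<pi> \<in> G" for \<sigma> \<pi>
    using permutes_inv_o[OF G_perm[OF that]] by (auto simp: comp_assoc)
  have "(\<Sum>\<sigma>\<in>P. \<nu> \<sigma> * real (card {\<pi>\<in>G. \<tau> = \<sigma> \<circ> \<pi>}))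
      = (\<Sum>\<sigma>\<in>P. \<Sum>\<pi>\<in>G. if \<tau> = \<sigma> \<circ> \<pi> then \<nu> \<sigma> else 0)"
    by (simp add: card_filter_sum[OF finG] sum_distrib_left if_distrib cong: if_cong)
  also have "\<dots> = (\<Sum>\<pi>\<in>G. \<Sum>\<sigma>\<in>P. if \<sigma> = \<tau> \<circ> inv \<pi> then \<nu> \<sigma> else 0)"
    by (subst sum.swap) (auto intro!: sum.cong simp: eq)
  also have "\<dots> = (\<Sum>\<pi>\<in>G. \<nu> (\<tau> \<circ> inv \<pi>))"
    using P_comp[OF tP G_inv] by (auto intro!: sum.cong simp: perms_finite)
  also have "\<dots> = (\<Sum>\<pi>\<in>G. \<nu> (\<tau> \<circ> \<pi>))" by (rule sum_G_inv)
  finally show ?thesis unfolding step_def avg_def by (simp add: sum_divide_distrib[symmetric])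
qed

lemma adjoint:
  assumes SP: "S \<subseteq> P"
  shows "sum (avg G \<nu>) S = (\<Sum>\<sigma>\<in>P. \<nu> \<sigma> * real (card {\<pi>\<in>G. \<sigma> \<circ> \<pi> \<in> S})) / real (card G)"
proof -
  have finG: "finite G" by (rule G_finite)
  have finP: "finite P" by (rule perms_finite)
  have inner: "(\<Sum>\<tau>\<in>S. \<nu> (\<tau> \<circ> inv \<pi>)) = (\<Sum>\<sigma>\<in>P. if \<sigma> \<circ> \<pi> \<in> S then \<nu> \<sigma> else 0)" if pG: "\<pi> \<in> G" for \<pi>
  proof -
    have "(\<Sum>\<tau>\<in>S. \<nu> (\<tau> \<circ> inv \<pi>)) = (\<Sum>\<tau>\<in>P. if \<tau> \<in> S then \<nu> (\<tau> \<circ> inv \<pi>) else 0)"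
      using SP finP by (simp add: sum.inter_filter[symmetric] Int_absorb1 Collect_mem_eq
          flip: Int_def)
    also have "\<dots> = (\<Sum>\<sigma>\<in>P. if \<sigma> \<circ> \<pi> \<in> S then \<nu> (\<sigma> \<circ> \<pi> \<circ> inv \<pi>) else 0)"
      using sum_P_comp[OF G_permN[OF pG], of "\<lambda>\<tau>. if \<tau> \<in> S then \<nu> (\<tau> \<circ> inv \<pi>) else 0"] by simp
    also have "\<dots> = (\<Sum>\<sigma>\<in>P. if \<sigma> \<circ> \<pi> \<in> S then \<nu> \<sigma> else 0)"
    proof -
      have e: "\<sigma> \<circ> \<pi> \<circ> inv \<pi> = \<sigma>" for \<sigma> :: "nat \<Rightarrow> nat"
        using permutes_inv_o(1)[OF G_perm[OF pG]] by (metis comp_assoc comp_id)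
      show ?thesis
      proof (rule sum.cong[OF refl])
        fix \<sigma> assume "\<sigma> \<in> P"
        show "(if \<sigma> \<circ> \<pi> \<in> S then \<nu> (\<sigma> \<circ> \<pi> \<circ> inv \<pi>) else 0) = (if \<sigma> \<circ> \<pi> \<in> S then \<nu> \<sigma> else 0)"
          using e[of \<sigma>] by simp
      qed
    qed
    finally show ?thesis .
  qed
  have "(\<Sum>\<tau>\<in>S. \<Sum>\<pi>\<in>G. \<nu> (\<tau> \<circ> \<pi>)) = (\<Sum>\<tau>\<in>S. \<Sum>\<pi>\<in>G. \<nu> (\<tau> \<circ> inv \<pi>))"
    by (simp add: sum_G_inv[of "\<lambda>\<pi>. \<nu> (_ \<circ> \<pi>)"])
  also have "\<dots> = (\<Sum>\<pi>\<in>G. \<Sum>\<tau>\<in>S. \<nu> (\<tau> \<circ> inv \<pi>))" by (rule sum.swap)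
  also have "\<dots> = (\<Sum>\<pi>\<in>G. \<Sum>\<sigma>\<in>P. if \<sigma> \<circ> \<pi> \<in> S then \<nu> \<sigma> else 0)"
    using inner by simp
  also have "\<dots> = (\<Sum>\<sigma>\<in>P. \<Sum>\<pi>\<in>G. if \<sigma> \<circ> \<pi> \<in> S then \<nu> \<sigma> else 0)" by (rule sum.swap)
  also have "\<dots> = (\<Sum>\<sigma>\<in>P. \<nu> \<sigma> * real (card {\<pi>\<in>G. \<sigma> \<circ> \<pi> \<in> S}))"
    by (simp add: card_filter_sum[OF finG] sum_distrib_left if_distrib cong: if_cong)
  finally show ?thesis unfolding avg_def by (simp add: sum_divide_distrib[symmetric])
qed

lemma avg_avg:
  assumes "H \<subseteq> G" "finite H" "card H > 0"
  shows "avg G (avg H f) \<sigma> = avg G f \<sigma>"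
proof -
  have finG: "finite G" by (rule G_finite)
  have re: "(\<Sum>\<pi>\<in>G. f (\<sigma> \<circ> (\<pi> \<circ> \<rho>))) = (\<Sum>\<pi>\<in>G. f (\<sigma> \<circ> \<pi>))" if "\<rho> \<in> H" for \<rho>
  proof -
    have rG: "\<rho> \<in> G" using that assms by auto
    show ?thesis
      by (rule sum.reindex_bij_witness[of _ "\<lambda>\<pi>. \<pi> \<circ> inv \<rho>" "\<lambda>\<pi>. \<pi> \<circ> \<rho>"])
         (auto simp: comp_assoc permutes_inv_o[OF G_perm[OF rG]] intro: G_comp G_inv rG)
  qed
  have "(\<Sum>\<pi>\<in>G. avg H f (\<sigma> \<circ> \<pi>)) = (\<Sum>\<pi>\<in>G. \<Sum>\<rho>\<in>H. f (\<sigma> \<circ> (\<pi> \<circ> \<rho>))) / real (card H)"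
    unfolding avg_def by (simp add: sum_divide_distrib[symmetric] comp_assoc)
  also have "\<dots> = (\<Sum>\<rho>\<in>H. \<Sum>\<pi>\<in>G. f (\<sigma> \<circ> (\<pi> \<circ> \<rho>))) / real (card H)" by (subst sum.swap) simp
  also have "\<dots> = (\<Sum>\<rho>\<in>H. \<Sum>\<pi>\<in>G. f (\<sigma> \<circ> \<pi>)) / real (card H)" using re by simp
  also have "\<dots> = (\<Sum>\<pi>\<in>G. f (\<sigma> \<circ> \<pi>))" using assms(3) by simp
  finally show ?thesis unfolding avg_def[of G "avg H f"] avg_def[of G f] by simp
qed

end

lemma layer_cake:
  fixes c :: "(nat \<Rightarrow> nat) \<Rightarrow> nat"
  assumes cinc: "\<And>\<sigma> \<sigma>'. \<sigma> \<in> perms N \<Longrightarrow> \<sigma>' \<in> perms N \<Longrightarrow> succeq N \<sigma> \<sigma>' \<Longrightarrow> c \<sigma>' \<le> c \<sigma>"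
    and cM: "\<And>\<sigma>. \<sigma> \<in> perms N \<Longrightarrow> c \<sigma> \<le> M"
    and domC: "\<And>S. increasing_set N S \<Longrightarrow> sum \<nu>U S \<le> sum \<nu>C S"
  shows "(\<Sum>\<sigma>\<in>perms N. \<nu>U \<sigma> * real (c \<sigma>)) \<le> (\<Sum>\<sigma>\<in>perms N. \<nu>C \<sigma> * real (c \<sigma>))"
proof -
  have finP: "finite (perms N)" by (rule perms_finite)
  have cs: "real (c \<sigma>) = (\<Sum>j\<in>{1..M}. if j \<le> c \<sigma> then 1 else 0)" if "\<sigma> \<in> perms N" for \<sigma>
  proof -
    have "{j\<in>{1..M}. j \<le> c \<sigma>} = {1..c \<sigma>}" using cM[OF that] by auto
    then show ?thesis using card_filter_sum[of "{1..M}" "\<lambda>j. j \<le> c \<sigma>"] by simp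
  qed
  have rew: "(\<Sum>\<sigma>\<in>perms N. \<nu> \<sigma> * real (c \<sigma>)) = (\<Sum>j\<in>{1..M}. sum \<nu> {\<sigma>\<in>perms N. j \<le> c \<sigma>})" for \<nu>
  proof -
    have "(\<Sum>\<sigma>\<in>perms N. \<nu> \<sigma> * real (c \<sigma>)) = (\<Sum>\<sigma>\<in>perms N. \<Sum>j\<in>{1..M}. if j \<le> c \<sigma> then \<nu> \<sigma> else 0)"
      using cs by (auto intro!: sum.cong simp: sum_distrib_left if_distrib cong: if_cong)
    also have "\<dots> = (\<Sum>j\<in>{1..M}. \<Sum>\<sigma>\<in>perms N. if j \<le> c \<sigma> then \<nu> \<sigma> else 0)" by (rule sum.swap)
    also have "\<dots> = (\<Sum>j\<in>{1..M}. sum \<nu> {\<sigma>\<in>perms N. j \<le> c \<sigma>})"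
      using finP by (simp add: sum.inter_filter)
    finally show ?thesis .
  qed
  have up: "increasing_set N {\<sigma>\<in>perms N. j \<le> c \<sigma>}" for j
    unfolding increasing_set_def using cinc by (auto intro: le_trans)
  show ?thesis unfolding rew by (rule sum_mono) (rule domC[OF up])
qed



definition domC :: "nat \<Rightarrow> ((nat \<Rightarrow> nat) \<Rightarrow> real) \<Rightarrow> ((nat \<Rightarrow> nat) \<Rightarrow> real) \<Rightarrow> bool" where
  "domC N \<nu>C \<nu>U \<longleftrightarrow> (\<forall>S. increasing_set N S \<longrightarrow> sum \<nu>U S \<le> sum \<nu>C S)"

lemma incr_cong:
  assumes "\<And>\<sigma>. \<sigma> \<in> perms N \<Longrightarrow> f \<sigma> = g \<sigma>"
  shows "increasing_fun N f \<longleftrightarrow> increasing_fun N g"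
  using assms unfolding increasing_fun_def by auto

lemma sum_cong_P:
  assumes "\<And>\<sigma>. \<sigma> \<in> perms N \<Longrightarrow> f \<sigma> = g \<sigma>" "increasing_set N S"
  shows "sum f S = sum g S"
  using assms unfolding increasing_set_def by (auto intro!: sum.cong)

lemma one_step:
  assumes i: "1 \<le> i" "i + k \<le> N + 1"
    and incC: "increasing_fun N \<nu>C" and d: "domC N \<nu>C \<nu>U"
  shows "increasing_fun N (step N E k i \<nu>C) \<and> domC N (step N E k i \<nu>C) (step N {} k i \<nu>U)"
proof -
  interpret A: blk N k i E using i by unfold_locales
  interpret B0: blk N k i "{}" using i by unfold_locales
  define \<nu>' where "\<nu>' = step N E k i \<nu>C"
  have e': "\<And>\<sigma>. \<sigma> \<in> perms N \<Longrightarrow> \<nu>' \<sigma> = avg A.G \<nu>C \<sigma>"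
    unfolding \<nu>'_def by (rule A.step_avg)
  have inc': "increasing_fun N \<nu>'"
  proof -
    have "increasing_fun N \<nu>' \<longleftrightarrow> increasing_fun N (avg A.G \<nu>C)"
      by (rule incr_cong) (rule e')
    then show ?thesis using A.key[OF incC] by blast
  qed
  have sub: "A.G \<subseteq> B0.G" unfolding shuffle_group_def same_piece_def by auto
  have "sum (step N {} k i \<nu>U) S \<le> sum \<nu>' S" if S: "increasing_set N S" for S
  proof -
    have SP: "S \<subseteq> perms N" using S unfolding increasing_set_def by auto
    define c where "c \<sigma> = card {\<pi>\<in>B0.G. \<sigma> \<circ> \<pi> \<in> S}" for \<sigma>
    define ind where "ind \<sigma> = (if \<sigma> \<in> S then 1 else 0::real)" for \<sigma>
    have ind_inc: "increasing_fun N ind"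
      using S unfolding increasing_fun_def increasing_set_def ind_def by auto
    have cavg: "real (c \<sigma>) = real (card B0.G) * avg B0.G ind \<sigma>" for \<sigma>
      unfolding c_def avg_def ind_def using B0.G_card_pos
      by (simp add: card_filter_sum[OF B0.G_finite])
    have cinc: "c \<sigma>' \<le> c \<sigma>" if "\<sigma> \<in> perms N" "\<sigma>' \<in> perms N" "succeq N \<sigma> \<sigma>'" for \<sigma> \<sigma>'
    proof -
      have "avg B0.G ind \<sigma>' \<le> avg B0.G ind \<sigma>"
        using B0.key[OF ind_inc] that unfolding increasing_fun_def by blast
      then have "real (c \<sigma>') \<le> real (c \<sigma>)" unfolding cavg by (simp add: mult_left_mono)
      then show ?thesis by simp
    qed
    have cM: "c \<sigma> \<le> card B0.G" for \<sigma>
      unfolding c_def using B0.G_finite by (intro card_mono) auto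
    have "sum (step N {} k i \<nu>U) S = sum (avg B0.G \<nu>U) S"
      by (rule sum_cong_P[OF B0.step_avg S])
    also have "\<dots> = (\<Sum>\<sigma>\<in>perms N. \<nu>U \<sigma> * real (c \<sigma>)) / real (card B0.G)"
      unfolding c_def by (rule B0.adjoint[OF SP])
    also have "\<dots> \<le> (\<Sum>\<sigma>\<in>perms N. \<nu>C \<sigma> * real (c \<sigma>)) / real (card B0.G)"
    proof -
      have "(\<Sum>\<sigma>\<in>perms N. \<nu>U \<sigma> * real (c \<sigma>)) \<le> (\<Sum>\<sigma>\<in>perms N. \<nu>C \<sigma> * real (c \<sigma>))"
      proof (rule layer_cake[where M="card B0.G"])
        show "\<And>\<sigma> \<sigma>'. \<sigma> \<in> perms N \<Longrightarrow> \<sigma>' \<in> perms N \<Longrightarrow> succeq N \<sigma> \<sigma>' \<Longrightarrow> c \<sigma>' \<le> c \<sigma>"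
          by (rule cinc)
        show "\<And>\<sigma>. \<sigma> \<in> perms N \<Longrightarrow> c \<sigma> \<le> card B0.G" by (rule cM)
        show "\<And>S. increasing_set N S \<Longrightarrow> sum \<nu>U S \<le> sum \<nu>C S" using d unfolding domC_def by blast
      qed
      then show ?thesis by (simp add: divide_right_mono)
    qed
    also have "\<dots> = sum (avg B0.G \<nu>C) S"
      unfolding c_def by (rule B0.adjoint[OF SP, symmetric])
    also have "\<dots> = sum (avg B0.G \<nu>') S"
    proof (rule sum_cong_P[OF _ S])
      fix \<sigma> assume sP: "\<sigma> \<in> perms N"
      have "avg B0.G \<nu>C \<sigma> = avg B0.G (avg A.G \<nu>C) \<sigma>"
        using B0.avg_avg[OF sub A.G_finite A.G_card_pos] by simp
      also have "\<dots> = avg B0.G \<nu>' \<sigma>"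
      proof -
        have "(\<Sum>\<pi>\<in>B0.G. avg A.G \<nu>C (\<sigma> \<circ> \<pi>)) = (\<Sum>\<pi>\<in>B0.G. \<nu>' (\<sigma> \<circ> \<pi>))"
          using e' B0.P_comp[OF sP] by (auto intro!: sum.cong)
        then show ?thesis by (simp add: avg_def[of B0.G])
      qed
      finally show "avg B0.G \<nu>C \<sigma> = avg B0.G \<nu>' \<sigma>" .
    qed
    also have "\<dots> \<le> sum \<nu>' S" using B0.key[OF inc'] S by blast
    finally show ?thesis .
  qed
  then show ?thesis using inc' unfolding \<nu>'_def domC_def by blast
qed

lemma iter:
  assumes "\<forall>u\<in>set L. 1 \<le> snd u \<and> snd u + k \<le> N + 1"
    and "increasing_fun N \<nu>C" "domC N \<nu>C \<nu>U"
  shows "increasing_fun N (foldl (\<lambda>\<nu> u. step N (Cs (fst u)) k (snd u) \<nu>) \<nu>C L)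
       \<and> domC N (foldl (\<lambda>\<nu> u. step N (Cs (fst u)) k (snd u) \<nu>) \<nu>C L)
               (foldl (\<lambda>\<nu> u. step N {} k (snd u) \<nu>) \<nu>U L)"
  using assms
proof (induction L arbitrary: \<nu>C \<nu>U)
  case Nil then show ?case by simp
next
  case (Cons u L)
  have "increasing_fun N (step N (Cs (fst u)) k (snd u) \<nu>C)
      \<and> domC N (step N (Cs (fst u)) k (snd u) \<nu>C) (step N {} k (snd u) \<nu>U)"
    using one_step[of "snd u" k N \<nu>C \<nu>U "Cs (fst u)"] Cons.prems by auto
  then show ?case using Cons.IH[of "step N (Cs (fst u)) k (snd u) \<nu>C" "step N {} k (snd u) \<nu>U"] Cons.prems
    by simp
qed

lemma incr_div_mu: "increasing_fun N (\<lambda>\<sigma>. g \<sigma> / mu N \<sigma>) \<longleftrightarrow> increasing_fun N g"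
proof -
  have pos: "(0::real) < fact N" by simp
  have "g \<sigma>' / mu N \<sigma>' \<le> g \<sigma> / mu N \<sigma> \<longleftrightarrow> g \<sigma>' \<le> g \<sigma>" for \<sigma> \<sigma>'
    unfolding mu_def using pos by simp
  then show ?thesis unfolding increasing_fun_def by simp
qed

theorem lemma3p2:
  fixes N k :: nat and \<nu>0 :: "(nat \<Rightarrow> nat) \<Rightarrow> real" and C :: "real \<Rightarrow> nat set"
    and us :: "(real \<times> nat) list" and t :: real
  assumes "k \<ge> 3"
    and "is_distribution N \<nu>0"
    and "increasing_fun N (\<lambda>\<sigma>. \<nu>0 \<sigma> / mu N \<sigma>)"
    and "censoring_scheme N C"
    and "update_times N k us"
    and "t \<ge> 0"
  shows "increasing_fun N (\<lambda>\<sigma>. law N k C \<nu>0 us t \<sigma> / mu N \<sigma>)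
         \<and> stoch_dom N (law N k C \<nu>0 us t) (law N k (\<lambda>_. {}) \<nu>0 us t)"
proof -
  have inc0: "increasing_fun N \<nu>0" using assms(3) incr_div_mu by blast
  have d0: "domC N \<nu>0 \<nu>0" unfolding domC_def by simp
  have valid: "\<forall>u\<in>set (filter (\<lambda>u. fst u \<le> t) us). 1 \<le> snd u \<and> snd u + k \<le> N + 1"
    using assms(5) unfolding update_times_def by auto
  have "increasing_fun N (law N k C \<nu>0 us t) \<and> domC N (law N k C \<nu>0 us t) (law N k (\<lambda>_. {}) \<nu>0 us t)"
    unfolding law_def using iter[OF valid inc0 d0, of C] by simp
  then show ?thesis unfolding incr_div_mu domC_def stoch_dom_def by blast
qed

end
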